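(* Fix $n\ge2$, points $\mathbf{X}_1,\dots,\mathbf{X}_n\in\mathbb{T}_d$, an index $i$, and assume $X_{j\ell}\in(a_\ell,b_\ell)$ for all $j\ne i$ and all $\ell$. Let $\alpha>3/2$ and $\beta_1,\dots,\beta_d>0$. Partition $\{1,\dots,d\}$ into $\mathbb{I}_a=\{\ell:X_{i\ell}=a_\ell\}$, $\mathbb{I}_b=\{\ell:X_{i\ell}=b_\ell\}$, $\mathbb{I}^c=\{\ell:X_{i\ell}\in(a_\ell,b_\ell)\}$. For $j\ne i$ define: for $\ell\in\mathbb{I}^c$: $B_{j\ell}=\beta_\ell-(b_\ell-a_\ell)^{-1}\big[(X_{i\ell}-a_\ell)\log\frac{X_{j\ell}-a_\ell}{X_{i\ell}-a_\ell}+(b_\ell-X_{i\ell})\log\frac{b_\ell-X_{j\ell}}{b_\ell-X_{i\ell}}\big]$, $A_{j\ell}=\{2\pi(X_{i\ell}-a_\ell)(b_\ell-X_{i\ell})\}^{-1/2}\beta_\ell^\alpha\Gamma(\alpha+\tfrac12)B_{j\ell}^{-\alpha-1/2}$, $C_{j\ell}=\{2\pi(X_{i\ell}-a_\ell)(b_\ell-X_{i\ell})\}^{-1/2}\beta_\ell^\alpha\Gamma(\alpha-\tfrac12)B_{j\ell}^{-\alpha+1/2}$, and set $M_{j\ell}(t)=A_{j\ell}IG_{\alpha+1/2,B_{j\ell}}(t)+C_{j\ell}IG_{\alpha-1/2,B_{j\ell}}(t)$, $w_{j\ell}=A_{j\ell}+C_{j\ell}$, $\mu_{j\ell}=B_{j\ell}\big(\frac{A_{j\ell}}{\alpha-1/2}+\frac{C_{j\ell}}{\alpha-3/2}\big)$;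 for $\ell\in\mathbb{I}_a$: $E_{j\ell}=\beta_\ell-\log\frac{b_\ell-X_{j\ell}}{b_\ell-a_\ell}$, $F_{j\ell}=\beta_\ell^\alpha(b_\ell-a_\ell)^{-1}\Gamma(\alpha)E_{j\ell}^{-\alpha}$, $H_{j\ell}=\beta_\ell^\alpha(b_\ell-a_\ell)^{-1}\Gamma(\alpha+1)E_{j\ell}^{-\alpha-1}$, $M_{j\ell}(t)=F_{j\ell}IG_{\alpha,E_{j\ell}}(t)+H_{j\ell}IG_{\alpha+1,E_{j\ell}}(t)$, $w_{j\ell}=F_{j\ell}+H_{j\ell}$, $\mu_{j\ell}=E_{j\ell}\big(\frac{F_{j\ell}}{\alpha-1}+\frac{H_{j\ell}}{\alpha}\big)$; for $\ell\in\mathbb{I}_b$: $G_{j\ell}=\beta_\ell-\log\frac{X_{j\ell}-a_\ell}{b_\ell-a_\ell}$, $J_{j\ell}=\beta_\ell^\alpha(b_\ell-a_\ell)^{-1}\Gamma(\alpha)G_{j\ell}^{-\alpha}$, $K_{j\ell}=\beta_\ell^\alpha(b_\ell-a_\ell)^{-1}\Gamma(\alpha+1)G_{j\ell}^{-\alpha-1}$, $M_{j\ell}(t)=J_{j\ell}IG_{\alpha,G_{j\ell}}(t)+K_{j\ell}IG_{\alpha+1,G_{j\ell}}(t)$, $w_{j\ell}=J_{j\ell}+K_{j\ell}$, $\mu_{j\ell}=G_{j\ell}\big(\frac{J_{j\ell}}{\alpha-1}+\frac{K_{j\ell}}{\alpha}\big)$. Let $D_i=\sum_{j\ne i}\prod_{\ell=1}^dw_{j\ell}$.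 Then (i) the posterior density defined in the context is $$\pi(\boldsymbol{h}\mid\mathbf{X}_i)=\frac1{D_i}\sum_{j=1,j\ne i}^n\prod_{\ell=1}^dM_{j\ell}(h_\ell),\qquad\boldsymbol{h}\in(0,\infty)^d;$$ (ii) the posterior mean (Bayes estimator under quadratic loss) $\widetilde{\boldsymbol h}_i=\mathbb{E}(\boldsymbol h\mid\mathbf{X}_i)$ has components $$\widetilde h_{im}=\frac1{D_i}\sum_{j=1,j\ne i}^n\Big(\prod_{\ell\ne m}w_{j\ell}\Big)\mu_{jm},\qquad m=1,\dots,d.$$
   Context: $\mathbb{T}_d=\prod_{\ell=1}^d[a_\ell,b_\ell]$, $-\infty<a_\ell<b_\ell<\infty$; $\mathbf{X}_j=(X_{j1},\dots,X_{jd})^\top$. For $a'>0,b'>0$, $IG_{a',b'}(t)=\frac{b'^{a'}}{\Gamma(a')}t^{-a'-1}e^{-b'/t}\mathbf 1_{(0,\infty)}(t)$ is the inverse-gamma density. The extended-beta kernel is $EB_{x,h,a,b}(u)=\frac{(u-a)^{(x-a)/\{(b-a)h\}}(b-u)^{(b-x)/\{(b-a)h\}}}{(b-a)^{1+1/h}B\{1+(x-a)/((b-a)h),1+(b-x)/((b-a)h)\}}\mathbf 1_{[a,b]}(u)$ ($B$ the beta function, $0^0=1$); in particular $EB_{a,h,a,b}(u)=(1+1/h)(b-u)^{1/h}(b-a)^{-1-1/h}$ and $EB_{b,h,a,b}(u)=(1+1/h)(u-a)^{1/h}(b-a)^{-1-1/h}$ on $[a,b]$. For interior $x\in(a,b)$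 the paper replaces $EB_{x,h,a,b}$ by its large-$1/h$ Stirling approximation $$\widetilde{EB}_{x,h,a,b}(u)=\frac{(1+h)\,h^{-1/2}}{\sqrt{2\pi(x-a)(b-x)}}\exp\Big\{\frac{1}{(b-a)h}\Big[(x-a)\log\frac{u-a}{x-a}+(b-x)\log\frac{b-u}{b-x}\Big]\Big\},\quad u\in(a,b).$$ For $\boldsymbol h=(h_1,\dots,h_d)\in(0,\infty)^d$ let $\kappa_\ell(u;h_\ell)=EB_{X_{i\ell},h_\ell,a_\ell,b_\ell}(u)$ if $\ell\in\mathbb{I}_a\cup\mathbb{I}_b$ and $\kappa_\ell(u;h_\ell)=\widetilde{EB}_{X_{i\ell},h_\ell,a_\ell,b_\ell}(u)$ if $\ell\in\mathbb{I}^c$; the (approximate) leave-one-out estimator is $\widehat f_{-i}(\mathbf X_i\mid\boldsymbol h)=\frac1{n-1}\sum_{j\ne i}\prod_{\ell=1}^d\kappa_\ell(X_{j\ell};h_\ell)$. The prior on the adaptive bandwidth vector is $\pi(\boldsymbol h)=\prod_{\ell=1}^dIG_{\alpha,\beta_\ell}(h_\ell)$ and the posterior is $\pi(\boldsymbol h\mid\mathbf X_i)=\widehat f_{-i}(\mathbf X_i\mid\boldsymbol h)\pi(\boldsymbol h)\big/\int_{(0,\infty)^d}\widehat f_{-i}(\mathbf X_i\mid\boldsymbol g)\pi(\boldsymbol g)d\boldsymbol g$. *)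

theory Defs
  imports "HOL-Analysis.Analysis"
begin

text \<open>Real power with the convention 0 to the power 0 equals 1 (Isabelle's powr gives 0 there).\<close>
definition zpow :: "real \<Rightarrow> real \<Rightarrow> real" where
  "zpow x e = (if e = 0 then 1 else x powr e)"

definition IG :: "real \<Rightarrow> real \<Rightarrow> real \<Rightarrow> real" where
  "IG a' b' t = (if 0 < t then b' powr a' / Gamma a' * t powr (- a' - 1) * exp (- b' / t) else 0)"

definition EB :: "real \<Rightarrow> real \<Rightarrow> real \<Rightarrow> real \<Rightarrow> real \<Rightarrow> real" where
  "EB x h a b u =
     (if a \<le> u \<and> u \<le> b then
        zpow (u - a) ((x - a) / ((b - a) * h)) * zpow (b - u) ((b - x) / ((b - a) * h))
        / ((b - a) powr (1 + 1 / h) * Beta (1 + (x - a) / ((b - a) * h)) (1 + (b - x) / ((b - a) * h)))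
      else 0)"

text \<open>Stirling approximation of the extended-beta kernel (defined for u in (a,b), 0 elsewhere).\<close>
definition EBt :: "real \<Rightarrow> real \<Rightarrow> real \<Rightarrow> real \<Rightarrow> real \<Rightarrow> real" where
  "EBt x h a b u =
     (if a < u \<and> u < b then
        (1 + h) * h powr (- 1 / 2) / sqrt (2 * pi * (x - a) * (b - x))
        * exp (1 / ((b - a) * h) * ((x - a) * ln ((u - a) / (x - a)) + (b - x) * ln ((b - u) / (b - x))))
      else 0)"

definition kappa :: "real \<Rightarrow> real \<Rightarrow> real \<Rightarrow> real \<Rightarrow> real \<Rightarrow> real" where
  "kappa a b xi h u = (if xi = a \<or> xi = b then EB xi h a b u else EBt xi h a b u)"

definition fhat_loo :: "nat \<Rightarrow> (nat \<Rightarrow> real^'d) \<Rightarrow> nat \<Rightarrow> real^'d \<Rightarrow> real^'d \<Rightarrow> real^'d \<Rightarrow> real" where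
  "fhat_loo n X i a b h =
     1 / (real n - 1) * (\<Sum>j\<in>{1..n} - {i}. \<Prod>l\<in>UNIV. kappa (a$l) (b$l) (X i $ l) (h$l) (X j $ l))"

definition prior :: "real \<Rightarrow> real^'d \<Rightarrow> real^'d \<Rightarrow> real" where
  "prior \<alpha> \<beta> h = (\<Prod>l\<in>UNIV. IG \<alpha> (\<beta>$l) (h$l))"

definition orthant :: "(real^'d) set" where
  "orthant = {h. \<forall>l. 0 < h$l}"

definition posterior :: "nat \<Rightarrow> (nat \<Rightarrow> real^'d) \<Rightarrow> nat \<Rightarrow> real^'d \<Rightarrow> real^'d \<Rightarrow> real \<Rightarrow> real^'d \<Rightarrow> real^'d \<Rightarrow> real" where
  "posterior n X i a b \<alpha> \<beta> h =
     fhat_loo n X i a b h * prior \<alpha> \<beta> h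
     / integral orthant (\<lambda>g. fhat_loo n X i a b g * prior \<alpha> \<beta> g)"

definition posterior_mean :: "nat \<Rightarrow> (nat \<Rightarrow> real^'d) \<Rightarrow> nat \<Rightarrow> real^'d \<Rightarrow> real^'d \<Rightarrow> real \<Rightarrow> real^'d \<Rightarrow> 'd \<Rightarrow> real" where
  "posterior_mean n X i a b \<alpha> \<beta> m =
     integral orthant (\<lambda>h. h$m * posterior n X i a b \<alpha> \<beta> h)"

definition Bq :: "real \<Rightarrow> real \<Rightarrow> real \<Rightarrow> real \<Rightarrow> real \<Rightarrow> real \<Rightarrow> real" where
  "Bq \<alpha> \<beta> a b xi xj = \<beta> - ((xi - a) * ln ((xj - a) / (xi - a)) + (b - xi) * ln ((b - xj) / (b - xi))) / (b - a)"
definition Aq :: "real \<Rightarrow> real \<Rightarrow> real \<Rightarrow> real \<Rightarrow> real \<Rightarrow> real \<Rightarrow> real" where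
  "Aq \<alpha> \<beta> a b xi xj = (2 * pi * (xi - a) * (b - xi)) powr (- 1 / 2) * \<beta> powr \<alpha> * Gamma (\<alpha> + 1 / 2)
      * Bq \<alpha> \<beta> a b xi xj powr (- \<alpha> - 1 / 2)"
definition Cq :: "real \<Rightarrow> real \<Rightarrow> real \<Rightarrow> real \<Rightarrow> real \<Rightarrow> real \<Rightarrow> real" where
  "Cq \<alpha> \<beta> a b xi xj = (2 * pi * (xi - a) * (b - xi)) powr (- 1 / 2) * \<beta> powr \<alpha> * Gamma (\<alpha> - 1 / 2)
      * Bq \<alpha> \<beta> a b xi xj powr (- \<alpha> + 1 / 2)"
definition Eq :: "real \<Rightarrow> real \<Rightarrow> real \<Rightarrow> real \<Rightarrow> real \<Rightarrow> real \<Rightarrow> real" where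
  "Eq \<alpha> \<beta> a b xi xj = \<beta> - ln ((b - xj) / (b - a))"
definition Fq :: "real \<Rightarrow> real \<Rightarrow> real \<Rightarrow> real \<Rightarrow> real \<Rightarrow> real \<Rightarrow> real" where
  "Fq \<alpha> \<beta> a b xi xj = \<beta> powr \<alpha> / (b - a) * Gamma \<alpha> * Eq \<alpha> \<beta> a b xi xj powr (- \<alpha>)"
definition Hq :: "real \<Rightarrow> real \<Rightarrow> real \<Rightarrow> real \<Rightarrow> real \<Rightarrow> real \<Rightarrow> real" where
  "Hq \<alpha> \<beta> a b xi xj = \<beta> powr \<alpha> / (b - a) * Gamma (\<alpha> + 1) * Eq \<alpha> \<beta> a b xi xj powr (- \<alpha> - 1)"
definition Gq :: "real \<Rightarrow> real \<Rightarrow> real \<Rightarrow> real \<Rightarrow> real \<Rightarrow> real \<Rightarrow> real" where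
  "Gq \<alpha> \<beta> a b xi xj = \<beta> - ln ((xj - a) / (b - a))"
definition Jq :: "real \<Rightarrow> real \<Rightarrow> real \<Rightarrow> real \<Rightarrow> real \<Rightarrow> real \<Rightarrow> real" where
  "Jq \<alpha> \<beta> a b xi xj = \<beta> powr \<alpha> / (b - a) * Gamma \<alpha> * Gq \<alpha> \<beta> a b xi xj powr (- \<alpha>)"
definition Kq :: "real \<Rightarrow> real \<Rightarrow> real \<Rightarrow> real \<Rightarrow> real \<Rightarrow> real \<Rightarrow> real" where
  "Kq \<alpha> \<beta> a b xi xj = \<beta> powr \<alpha> / (b - a) * Gamma (\<alpha> + 1) * Gq \<alpha> \<beta> a b xi xj powr (- \<alpha> - 1)"

definition Mq :: "real \<Rightarrow> real \<Rightarrow> real \<Rightarrow> real \<Rightarrow> real \<Rightarrow> real \<Rightarrow> real \<Rightarrow> real" where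
  "Mq \<alpha> \<beta> a b xi xj t =
     (if xi = a then Fq \<alpha> \<beta> a b xi xj * IG \<alpha> (Eq \<alpha> \<beta> a b xi xj) t
                    + Hq \<alpha> \<beta> a b xi xj * IG (\<alpha> + 1) (Eq \<alpha> \<beta> a b xi xj) t
      else if xi = b then Jq \<alpha> \<beta> a b xi xj * IG \<alpha> (Gq \<alpha> \<beta> a b xi xj) t
                    + Kq \<alpha> \<beta> a b xi xj * IG (\<alpha> + 1) (Gq \<alpha> \<beta> a b xi xj) t
      else Aq \<alpha> \<beta> a b xi xj * IG (\<alpha> + 1 / 2) (Bq \<alpha> \<beta> a b xi xj) t
         + Cq \<alpha> \<beta> a b xi xj * IG (\<alpha> - 1 / 2) (Bq \<alpha> \<beta> a b xi xj) t)"
definition wq :: "real \<Rightarrow> real \<Rightarrow> real \<Rightarrow> real \<Rightarrow> real \<Rightarrow> real \<Rightarrow> real" where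
  "wq \<alpha> \<beta> a b xi xj =
     (if xi = a then Fq \<alpha> \<beta> a b xi xj + Hq \<alpha> \<beta> a b xi xj
      else if xi = b then Jq \<alpha> \<beta> a b xi xj + Kq \<alpha> \<beta> a b xi xj
      else Aq \<alpha> \<beta> a b xi xj + Cq \<alpha> \<beta> a b xi xj)"
definition muq :: "real \<Rightarrow> real \<Rightarrow> real \<Rightarrow> real \<Rightarrow> real \<Rightarrow> real \<Rightarrow> real" where
  "muq \<alpha> \<beta> a b xi xj =
     (if xi = a then Eq \<alpha> \<beta> a b xi xj * (Fq \<alpha> \<beta> a b xi xj / (\<alpha> - 1) + Hq \<alpha> \<beta> a b xi xj / \<alpha>)
      else if xi = b then Gq \<alpha> \<beta> a b xi xj * (Jq \<alpha> \<beta> a b xi xj / (\<alpha> - 1) + Kq \<alpha> \<beta> a b xi xj / \<alpha>)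
      else Bq \<alpha> \<beta> a b xi xj * (Aq \<alpha> \<beta> a b xi xj / (\<alpha> - 1 / 2) + Cq \<alpha> \<beta> a b xi xj / (\<alpha> - 3 / 2)))"

end

theory Submission imports Defs begin



lemma prod_has_integral:
  fixes \<phi> :: "'d::finite \<Rightarrow> real \<Rightarrow> real" and I :: "'d \<Rightarrow> real"
  assumes meas: "\<And>l. \<phi> l \<in> borel_measurable borel"
    and nn: "\<And>l t. 0 \<le> \<phi> l t"
    and int: "\<And>l. (\<phi> l has_integral I l) UNIV"
  shows "((\<lambda>h::real^'d. \<Prod>l\<in>UNIV. \<phi> l (h$l)) has_integral (\<Prod>l\<in>UNIV. I l)) UNIV"
proof -
  have I0: "0 \<le> I l" for l using has_integral_nonneg[OF int[of l]] nn by auto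
  have nnI: "integral\<^sup>N lborel (\<lambda>t. ennreal (\<phi> l t)) = ennreal (I l)" for l
    by (rule nn_integral_has_integral_lborel[OF meas nn int])
  define f where "f b t = \<phi> (SOME l. axis l 1 = b) t" for b :: "real^'d" and t
  have fax: "f (axis l 1) = \<phi> l" for l
    unfolding f_def by (rule ext) (metis (mono_tags, lifting) axis_eq_axis someI_ex zero_neq_one)
  have B: "(Basis :: (real^'d) set) = (\<lambda>l. axis l 1) ` UNIV"
    by (auto simp: Basis_vec_def)
  have inj: "inj (\<lambda>l::'d. axis l (1::real))"
    by (auto simp: inj_on_def axis_eq_axis)
  have P: "(\<Prod>b\<in>Basis. g b) = (\<Prod>l\<in>UNIV. g (axis l 1))" for g :: "real^'d \<Rightarrow> 'z::comm_monoid_mult"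
    unfolding B by (subst prod.reindex[OF inj]) auto
  have fm: "b \<in> Basis \<Longrightarrow> f b \<in> borel_measurable borel" for b
    using meas unfolding B by (auto simp: fax)
  have fn: "b \<in> Basis \<Longrightarrow> 0 \<le> f b x" for b x
    using nn unfolding B by (auto simp: fax)
  have eq1: "(\<lambda>h::real^'d. \<Prod>l\<in>UNIV. \<phi> l (h$l)) = (\<lambda>h. \<Prod>b\<in>Basis. f b (h \<bullet> b))"
    by (rule ext, subst P) (simp add: fax cart_eq_inner_axis)
  have eq1p: "(\<Prod>l\<in>UNIV. \<phi> l (h$l)) = (\<Prod>b\<in>Basis. f b (h \<bullet> b))" for h :: "real^'d"
    by (subst P) (simp add: fax cart_eq_inner_axis)
  have "(\<integral>\<^sup>+h. ennreal (\<Prod>b\<in>Basis. f b (h \<bullet> b)) \<partial>lborel) = (\<integral>\<^sup>+h. (\<Prod>b\<in>Basis. ennreal (f b (h \<bullet> b))) \<partial>lborel)"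
    by (simp add: prod_ennreal fn)
  also have "\<dots> = (\<Prod>b\<in>Basis. (\<integral>\<^sup>+x. ennreal (f b x) \<partial>lborel))"
    by (rule nn_integral_lborel_prod) (use fm in auto)
  also have "\<dots> = (\<Prod>l\<in>UNIV. ennreal (I l))"
    by (subst P) (simp add: fax nnI)
  also have "\<dots> = ennreal (\<Prod>l\<in>UNIV. I l)"
    by (simp add: prod_ennreal I0)
  finally have NN: "(\<integral>\<^sup>+h. ennreal (\<Prod>l\<in>UNIV. \<phi> l (h$l)) \<partial>lborel) = ennreal (\<Prod>l\<in>UNIV. I l)"
    by (simp only: eq1p)
  have M: "(\<lambda>h::real^'d. \<Prod>l\<in>UNIV. \<phi> l (h$l)) \<in> borel_measurable borel"
    using meas by measurable
  show ?thesis
    by (rule nn_integral_has_integral[OF M _ NN]) (auto intro: prod_nonneg nn simp: I0 prod_nonneg)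
qed



lemma inv_gamma_integral:
  fixes c B :: real
  assumes c: "c > 0" and B: "B > 0"
  shows "((\<lambda>t. t powr (-c-1) * exp(-B/t)) has_integral (B powr (-c) * Gamma c)) {0<..}"
proof -
  have G0: "((\<lambda>s. s powr (c-1) / exp s) has_integral Gamma c) {0..}"
    by (rule Gamma_integral_real[OF c])
  have G1: "((\<lambda>s. s powr (c-1) / exp s) has_integral Gamma c) {0<..}"
    using G0 by (subst has_integral_spike_set_eq[of _ "{0..}"]) (auto intro: negligible_subset[of "{0}"])
  have G2: "((\<lambda>s. B powr (-c) * (s powr (c-1) / exp s)) has_integral (B powr (-c) * Gamma c)) {0<..}"
    by (rule has_integral_mult_right[OF G1])
  define g where "g s = B / s" for s :: real
  define g' where "g' s = - B / s^2" for s :: real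
  define f where "f t = t powr (-c-1) * exp(-B/t)" for t :: real
  have pt: "\<bar>g' s\<bar> * f (g s) = B powr (-c) * (s powr (c-1) / exp s)" if s: "s > 0" for s
  proof -
    have a1: "\<bar>g' s\<bar> = B / s^2" using s B by (simp add: g'_def)
    have a2: "(B/s) powr (-c-1) = B powr (-c-1) * s powr (c+1)"
      using s B by (simp add: powr_divide powr_minus divide_simps) (simp add: powr_add[symmetric])
    have a3: "exp (-B / (B/s)) = 1 / exp s" using s B by (simp add: exp_minus field_simps)
    have a4: "B powr (-c-1) = B powr (-c) / B" using B by (simp add: powr_diff)
    have a5: "s powr (c+1) = s powr (c-1) * s^2"
    proof -
      have "s powr (c+1) = s powr ((c-1) + 2)" by (simp add: add.commute)
      also have "\<dots> = s powr (c-1) * s powr 2" by (rule powr_add)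
      also have "s powr 2 = s^2" using s by (simp add: powr_numeral)
      finally show ?thesis .
    qed
    show ?thesis unfolding f_def g_def a1 a2 a3 a4 a5 using s B by (simp add: field_simps power2_eq_square)
  qed
  have L: "((\<lambda>s. \<bar>g' s\<bar> * f (g s)) has_integral (B powr (-c) * Gamma c)) {0<..}"
    using G2 by (subst has_integral_cong[where g="\<lambda>s. B powr (-c) * (s powr (c-1) / exp s)"]) (auto simp: pt)
  have Labs: "(\<lambda>s. \<bar>g' s\<bar> * f (g s)) absolutely_integrable_on {0<..}"
  proof (rule nonnegative_absolutely_integrable_1)
    show "(\<lambda>s. \<bar>g' s\<bar> * f (g s)) integrable_on {0<..}" using L by blast
    fix x :: real assume "x \<in> {0<..}"
    then show "0 \<le> \<bar>g' x\<bar> * f (g x)" by (simp add: f_def)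
  qed
  have der: "(g has_field_derivative g' x) (at x within {0<..})" if "x \<in> {0<..}" for x
    using that unfolding g_def g'_def
    by (auto intro!: derivative_eq_intros simp: power2_eq_square)
  have inj: "inj_on g {0<..}" using B by (auto simp: inj_on_def g_def field_simps)
  have img: "g ` {0<..} = {0<..}"
  proof
    show "g ` {0<..} \<subseteq> {0<..}" using B by (auto simp: g_def)
    show "{0<..} \<subseteq> g ` {0<..}"
    proof
      fix t :: real assume "t \<in> {0<..}"
      then have "t = g (B/t)" "B/t \<in> {0<..}" using B by (auto simp: g_def)
      then show "t \<in> g ` {0<..}" by blast
    qed
  qed
  have "f absolutely_integrable_on (g ` {0<..}) \<and> integral (g ` {0<..}) f = B powr (-c) * Gamma c"
    using has_absolute_integral_change_of_variables_1'[of "{0<..}" g g' f "B powr (-c) * Gamma c"] der inj Labs L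
    by (auto simp: integral_unique)
  then have "f integrable_on {0<..}" "integral {0<..} f = B powr (-c) * Gamma c"
    unfolding img absolutely_integrable_on_def by auto
  then have "(f has_integral (B powr (-c) * Gamma c)) {0<..}"
    using has_integral_integral by metis
  then show ?thesis unfolding f_def .
qed


lemma IG_meas: "IG a' B \<in> borel_measurable borel"
  unfolding IG_def by measurable

lemma IG_nonneg: "a' > 0 \<Longrightarrow> 0 \<le> IG a' B t"
  unfolding IG_def by (simp add: Gamma_real_pos less_imp_le)

lemma IG_integral:
  assumes a: "a' > 0" and B: "B > 0"
  shows "(IG a' B has_integral 1) UNIV"
proof -
  have Gp: "Gamma a' > 0" using a by (simp add: Gamma_real_pos)
  have "((\<lambda>t. B powr a' / Gamma a' * (t powr (-a'-1) * exp(-B/t))) has_integral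
          (B powr a' / Gamma a' * (B powr (-a') * Gamma a'))) {0<..}"
    by (rule has_integral_mult_right[OF inv_gamma_integral[OF a B]])
  moreover have "B powr a' / Gamma a' * (B powr (-a') * Gamma a') = 1"
    using Gp B by (simp add: powr_minus field_simps)
  ultimately have "((\<lambda>t. B powr a' / Gamma a' * (t powr (-a'-1) * exp(-B/t))) has_integral 1) {0<..}"
    by simp
  then have "((\<lambda>t. if t \<in> {0<..} then B powr a' / Gamma a' * (t powr (-a'-1) * exp(-B/t)) else 0) has_integral 1) UNIV"
    by (subst has_integral_restrict_UNIV)
  moreover have "(\<lambda>t. if t \<in> {0<..} then B powr a' / Gamma a' * (t powr (-a'-1) * exp(-B/t)) else 0) = IG a' B"
    by (rule ext) (simp add: IG_def)
  ultimately show ?thesis by simp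
qed

lemma IG_mean:
  assumes a: "a' > 1" and B: "B > 0"
  shows "((\<lambda>t. t * IG a' B t) has_integral B / (a' - 1)) UNIV"
proof -
  have a0: "a' - 1 > 0" using a by simp
  have Gp: "Gamma (a'-1) > 0" using a0 by (simp add: Gamma_real_pos)
  have Gs: "Gamma a' = (a' - 1) * Gamma (a' - 1)"
  proof -
    have "a' - 1 \<notin> \<int>\<^sub>\<le>\<^sub>0" using a0 nonpos_Ints_nonpos by fastforce
    then show ?thesis using Gamma_plus1[of "a' - 1"] by simp
  qed
  have "((\<lambda>t. B powr a' / Gamma a' * (t powr (-(a'-1)-1) * exp(-B/t))) has_integral
          (B powr a' / Gamma a' * (B powr (-(a'-1)) * Gamma (a'-1)))) {0<..}"
    by (rule has_integral_mult_right[OF inv_gamma_integral[OF a0 B]])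
  moreover have "B powr a' / Gamma a' * (B powr (-(a'-1)) * Gamma (a'-1)) = B / (a' - 1)"
  proof -
    have "B powr a' * B powr (-(a'-1)) = B" using B
      by (simp add: powr_add[symmetric])
    moreover have "x / (k * G) * (y * G) = (x * y) / k" if "G > 0" for x y k G :: real
      using that by (simp add: field_simps)
    ultimately show ?thesis using Gp unfolding Gs by simp
  qed
  ultimately have I: "((\<lambda>t. B powr a' / Gamma a' * (t powr (-(a'-1)-1) * exp(-B/t))) has_integral B / (a' - 1)) {0<..}"
    by simp
  have "((\<lambda>t. if t \<in> {0<..} then B powr a' / Gamma a' * (t powr (-(a'-1)-1) * exp(-B/t)) else 0) has_integral B / (a' - 1)) UNIV"
    using I by (subst has_integral_restrict_UNIV)
  moreover have "(\<lambda>t. if t \<in> {0<..} then B powr a' / Gamma a' * (t powr (-(a'-1)-1) * exp(-B/t)) else 0) = (\<lambda>t. t * IG a' B t)"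
  proof (rule ext)
    fix t :: real
    show "(if t \<in> {0<..} then B powr a' / Gamma a' * (t powr (-(a'-1)-1) * exp(-B/t)) else 0) = t * IG a' B t"
    proof (cases "t > 0")
      case True
      have "t * t powr (-a'-1) = t powr (-(a'-1)-1)"
        using True by (simp add: powr_add[symmetric] powr_mult_base algebra_simps)
      then show ?thesis using True by (simp add: IG_def)
    qed (simp add: IG_def)
  qed
  ultimately show ?thesis by simp
qed


lemma Gamma_plus1_pos: "(x::real) > 0 \<Longrightarrow> Gamma (x + 1) = x * Gamma x"
proof -
  assume x: "x > 0"
  have "x \<notin> \<int>\<^sub>\<le>\<^sub>0" using x nonpos_Ints_nonpos by fastforce
  then show ?thesis using Gamma_plus1[of x] by simp
qed

lemma Beta_1_left: "(y::real) > 0 \<Longrightarrow> Beta 1 (1 + y) = 1 / (1 + y)"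
proof -
  assume y: "y > 0"
  have g: "Gamma (1 + (1 + y)) = (1 + y) * Gamma (1 + y)"
    using Gamma_plus1_pos[of "1+y"] y by (simp add: add.commute)
  have "Gamma (1 + y) > 0" using y by (simp add: Gamma_real_pos)
  then show ?thesis unfolding Beta_def g by simp
qed

lemma Beta_1_right: "(y::real) > 0 \<Longrightarrow> Beta (1 + y) 1 = 1 / (1 + y)"
  using Beta_1_left[of y] by (simp add: Beta_def mult.commute add.commute)

lemma kappa_a:
  assumes ab: "a < b" and u: "a < u" "u < b" and t: "t > 0"
  shows "kappa a b a t u = (1 + 1/t) / (b - a) * exp (ln ((b - u) / (b - a)) / t)"
proof -
  have e1: "(b - a) / ((b - a) * t) = 1 / t" using ab t by simp
  have z1: "zpow (u - a) ((a - a) / ((b - a) * t)) = 1" by (simp add: zpow_def)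
  have z2: "zpow (b - u) (1 / t) = exp (ln (b - u) / t)" using t u by (simp add: zpow_def powr_def)
  have p: "(b - a) powr (1 + 1 / t) = (b - a) * exp (ln (b - a) / t)"
  proof -
    have "(b - a) powr (1 + 1 / t) = (b - a) powr 1 * (b - a) powr (1 / t)" by (rule powr_add)
    moreover have "(b - a) powr (1 / t) = exp (ln (b - a) / t)" using ab by (simp add: powr_def)
    ultimately show ?thesis using ab by simp
  qed
  have bt: "Beta (1 + (a - a) / ((b - a) * t)) (1 + 1 / t) = 1 / (1 + 1/t)"
    using Beta_1_left[of "1/t"] t by simp
  have ex: "exp (ln ((b - u) / (b - a)) / t) = exp (ln (b - u) / t) / exp (ln (b - a) / t)"
  proof -
    have "ln ((b - u) / (b - a)) = ln (b - u) - ln (b - a)" using ab u by (simp add: ln_div)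
    then show ?thesis by (simp add: diff_divide_distrib exp_diff)
  qed
  show ?thesis
    unfolding kappa_def EB_def using u ab
    apply (simp only: if_True simp_thms e1 z1 z2 p bt ex)
    apply (simp add: field_simps)
    done
qed


lemma powr_cancel: "(x::real) > 0 \<Longrightarrow> x powr (- p) * x powr p = 1"
  by (simp add: powr_add[symmetric])

lemma powr_m1: "(t::real) > 0 \<Longrightarrow> t powr (q - 1) = t powr q / t"
  by (simp add: powr_diff)

lemma kIG_a:
  assumes ab: "a < b" and u: "a < u" "u < b" and t: "t > 0" and al: "\<alpha> > 0" and be: "\<beta> > 0"
  shows "kappa a b a t u * IG \<alpha> \<beta> t = Mq \<alpha> \<beta> a b a u t / Gamma \<alpha>"
proof -
  define E where "E = Eq \<alpha> \<beta> a b a u"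
  define r where "r = ln ((b - u) / (b - a))"
  have r0: "r < 0" unfolding r_def using ab u by (simp add: ln_less_zero_iff divide_simps)
  have E: "E = \<beta> - r" unfolding E_def r_def Eq_def ..
  have Ep: "E > 0" using E r0 be by simp
  have G1: "Gamma \<alpha> > 0" using al by (simp add: Gamma_real_pos)
  have G2: "Gamma (\<alpha> + 1) > 0" using al by (simp add: Gamma_real_pos)
  have e1: "E powr (- \<alpha>) * E powr \<alpha> = 1" using Ep by (rule powr_cancel)
  have e2: "E powr (- \<alpha> - 1) * E powr (\<alpha> + 1) = 1" using powr_cancel[OF Ep, of "\<alpha>+1"] by simp
  have t1: "t powr (- (\<alpha> + 1) - 1) = t powr (- \<alpha> - 1) / t" using powr_m1[OF t, of "- \<alpha> - 1"] by simp
  have ex: "exp (- E / t) = exp (- \<beta> / t) * exp (r / t)"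
    unfolding E by (simp add: diff_divide_distrib exp_add[symmetric])
  have m1: "Fq \<alpha> \<beta> a b a u * IG \<alpha> E t = \<beta> powr \<alpha> / (b - a) * (E powr (- \<alpha>) * E powr \<alpha>) * (Gamma \<alpha> / Gamma \<alpha>) * (t powr (- \<alpha> - 1) * exp (- E / t))"
    unfolding Fq_def IG_def E_def[symmetric] using t by (simp add: divide_inverse ac_simps)
  have m2: "Hq \<alpha> \<beta> a b a u * IG (\<alpha> + 1) E t = \<beta> powr \<alpha> / (b - a) * (E powr (- \<alpha> - 1) * E powr (\<alpha> + 1)) * (Gamma (\<alpha> + 1) / Gamma (\<alpha> + 1)) * (t powr (- \<alpha> - 1) / t * exp (- E / t))"
    unfolding Hq_def IG_def E_def[symmetric] using t t1 by (simp add: divide_inverse ac_simps)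
  have M: "Mq \<alpha> \<beta> a b a u t = \<beta> powr \<alpha> / (b - a) * (t powr (- \<alpha> - 1) + t powr (- \<alpha> - 1) / t) * exp (- E / t)"
    unfolding Mq_def E_def[symmetric] using m1 m2 G1 G2 unfolding e1 e2 by (simp add: algebra_simps)
  show ?thesis
    unfolding M kappa_a[OF ab u t, folded r_def] ex using G1 t
    by (simp add: IG_def field_simps)
qed


lemma kappa_b:
  assumes ab: "a < b" and u: "a < u" "u < b" and t: "t > 0"
  shows "kappa a b b t u = (1 + 1/t) / (b - a) * exp (ln ((u - a) / (b - a)) / t)"
proof -
  have e1: "(b - a) / ((b - a) * t) = 1 / t" using ab t by simp
  have z1: "zpow (b - u) ((b - b) / ((b - a) * t)) = 1" by (simp add: zpow_def)
  have z2: "zpow (u - a) (1 / t) = exp (ln (u - a) / t)" using t u by (simp add: zpow_def powr_def)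
  have p: "(b - a) powr (1 + 1 / t) = (b - a) * exp (ln (b - a) / t)"
  proof -
    have "(b - a) powr (1 + 1 / t) = (b - a) powr 1 * (b - a) powr (1 / t)" by (rule powr_add)
    moreover have "(b - a) powr (1 / t) = exp (ln (b - a) / t)" using ab by (simp add: powr_def)
    ultimately show ?thesis using ab by simp
  qed
  have bt: "Beta (1 + 1 / t) (1 + (b - b) / ((b - a) * t)) = 1 / (1 + 1/t)"
    using Beta_1_right[of "1/t"] t by simp
  have ex: "exp (ln ((u - a) / (b - a)) / t) = exp (ln (u - a) / t) / exp (ln (b - a) / t)"
  proof -
    have "ln ((u - a) / (b - a)) = ln (u - a) - ln (b - a)" using ab u by (simp add: ln_div)
    then show ?thesis by (simp add: diff_divide_distrib exp_diff)
  qed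
  show ?thesis
    unfolding kappa_def EB_def using u ab
    apply (simp only: if_True simp_thms e1 z1 z2 p bt ex)
    apply (simp add: field_simps)
    done
qed

lemma kIG_b:
  assumes ab: "a < b" and u: "a < u" "u < b" and t: "t > 0" and al: "\<alpha> > 0" and be: "\<beta> > 0"
  shows "kappa a b b t u * IG \<alpha> \<beta> t = Mq \<alpha> \<beta> a b b u t / Gamma \<alpha>"
proof -
  define E where "E = Gq \<alpha> \<beta> a b b u"
  define r where "r = ln ((u - a) / (b - a))"
  have r0: "r < 0" unfolding r_def using ab u by (simp add: ln_less_zero_iff divide_simps)
  have E: "E = \<beta> - r" unfolding E_def r_def Gq_def ..
  have Ep: "E > 0" using E r0 be by simp
  have G1: "Gamma \<alpha> > 0" using al by (simp add: Gamma_real_pos)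
  have G2: "Gamma (\<alpha> + 1) > 0" using al by (simp add: Gamma_real_pos)
  have e1: "E powr (- \<alpha>) * E powr \<alpha> = 1" using Ep by (rule powr_cancel)
  have e2: "E powr (- \<alpha> - 1) * E powr (\<alpha> + 1) = 1" using powr_cancel[OF Ep, of "\<alpha>+1"] by simp
  have t1: "t powr (- (\<alpha> + 1) - 1) = t powr (- \<alpha> - 1) / t" using powr_m1[OF t, of "- \<alpha> - 1"] by simp
  have ex: "exp (- E / t) = exp (- \<beta> / t) * exp (r / t)"
    unfolding E by (simp add: diff_divide_distrib exp_add[symmetric])
  have m1: "Jq \<alpha> \<beta> a b b u * IG \<alpha> E t = \<beta> powr \<alpha> / (b - a) * (E powr (- \<alpha>) * E powr \<alpha>) * (Gamma \<alpha> / Gamma \<alpha>) * (t powr (- \<alpha> - 1) * exp (- E / t))"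
    unfolding Jq_def IG_def E_def[symmetric] using t by (simp add: divide_inverse ac_simps)
  have m2: "Kq \<alpha> \<beta> a b b u * IG (\<alpha> + 1) E t = \<beta> powr \<alpha> / (b - a) * (E powr (- \<alpha> - 1) * E powr (\<alpha> + 1)) * (Gamma (\<alpha> + 1) / Gamma (\<alpha> + 1)) * (t powr (- \<alpha> - 1) / t * exp (- E / t))"
    unfolding Kq_def IG_def E_def[symmetric] using t t1 by (simp add: divide_inverse ac_simps)
  have M: "Mq \<alpha> \<beta> a b b u t = \<beta> powr \<alpha> / (b - a) * (t powr (- \<alpha> - 1) + t powr (- \<alpha> - 1) / t) * exp (- E / t)"
    unfolding Mq_def E_def[symmetric] using m1 m2 G1 G2 ab unfolding e1 e2 by (simp add: algebra_simps)
  show ?thesis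
    unfolding M kappa_b[OF ab u t, folded r_def] ex using G1 t
    by (simp add: IG_def field_simps)
qed

lemma kappa_int:
  assumes x: "a < x" "x < b" and u: "a < u" "u < b" and t: "t > 0"
  shows "kappa a b x t u = (1 + t) * t powr (- 1 / 2) / sqrt (2 * pi * (x - a) * (b - x))
     * exp (((x - a) * ln ((u - a) / (x - a)) + (b - x) * ln ((b - u) / (b - x))) / (b - a) / t)"
proof -
  have e: "1 / ((b - a) * t) * S = S / (b - a) / t" for S :: real by simp
  show ?thesis using x u unfolding kappa_def EBt_def e by simp
qed

lemma alg_int: "(s::real) \<noteq> 0 \<Longrightarrow> G \<noteq> 0 \<Longrightarrow>
   (1 + t) * P / s * X * (Q / G * T * Y) = 1 / s * Q * (P * T + t * (P * T)) * (Y * X) / G"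
  by (simp add: field_simps)

lemma kIG_int:
  assumes x: "a < x" "x < b" and u: "a < u" "u < b" and t: "t > 0" and al: "\<alpha> > 1/2" and be: "\<beta> > 0"
    and Bp: "Bq \<alpha> \<beta> a b x u > 0"
  shows "kappa a b x t u * IG \<alpha> \<beta> t = Mq \<alpha> \<beta> a b x u t / Gamma \<alpha>"
proof -
  define E where "E = Bq \<alpha> \<beta> a b x u"
  define r where "r = ((x - a) * ln ((u - a) / (x - a)) + (b - x) * ln ((b - u) / (b - x))) / (b - a)"
  define K where "K = 2 * pi * (x - a) * (b - x)"
  have Kp: "K > 0" unfolding K_def using x by simp
  have E: "E = \<beta> - r" unfolding E_def r_def Bq_def ..
  have Ep: "E > 0" using Bp E_def by simp
  have G1: "Gamma \<alpha> > 0" using al by (simp add: Gamma_real_pos)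
  have G2: "Gamma (\<alpha> + 1 / 2) > 0" using al by (simp add: Gamma_real_pos)
  have G3: "Gamma (\<alpha> - 1 / 2) > 0" using al by (simp add: Gamma_real_pos)
  have e1: "E powr (- \<alpha> - 1 / 2) * E powr (\<alpha> + 1 / 2) = 1" using powr_cancel[OF Ep, of "\<alpha>+1/2"] by simp
  have e2: "E powr (- \<alpha> + 1 / 2) * E powr (\<alpha> - 1 / 2) = 1" using powr_cancel[OF Ep, of "\<alpha>-1/2"] by simp
  have t1: "t powr (- (\<alpha> + 1 / 2) - 1) = t powr (- 1 / 2) * t powr (- \<alpha> - 1)"
    by (simp add: powr_add[symmetric])
  have t2: "t powr (- (\<alpha> - 1 / 2) - 1) = t * (t powr (- 1 / 2) * t powr (- \<alpha> - 1))"
  proof -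
    have "t powr (1 + (- 1 / 2 + (- \<alpha> - 1))) = t powr 1 * (t powr (- 1 / 2) * t powr (- \<alpha> - 1))"
      by (simp only: powr_add)
    moreover have "1 + (- 1 / 2 + (- \<alpha> - 1)) = - (\<alpha> - 1 / 2) - 1" by simp
    ultimately show ?thesis using t by simp
  qed
  have k: "K powr (- 1 / 2) = 1 / sqrt K"
    using Kp by (simp add: powr_minus_divide powr_half_sqrt)
  have ex: "exp (- E / t) = exp (- \<beta> / t) * exp (r / t)"
    unfolding E by (simp add: diff_divide_distrib exp_add[symmetric])
  have m1: "Aq \<alpha> \<beta> a b x u * IG (\<alpha> + 1 / 2) E t = K powr (- 1 / 2) * \<beta> powr \<alpha> * (E powr (- \<alpha> - 1 / 2) * E powr (\<alpha> + 1 / 2)) * (Gamma (\<alpha> + 1 / 2) / Gamma (\<alpha> + 1 / 2)) * (t powr (- (\<alpha> + 1 / 2) - 1) * exp (- E / t))"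
    unfolding Aq_def IG_def E_def[symmetric] K_def[symmetric] if_P[OF t] by (simp only: divide_inverse mult_ac)
  have m2: "Cq \<alpha> \<beta> a b x u * IG (\<alpha> - 1 / 2) E t = K powr (- 1 / 2) * \<beta> powr \<alpha> * (E powr (- \<alpha> + 1 / 2) * E powr (\<alpha> - 1 / 2)) * (Gamma (\<alpha> - 1 / 2) / Gamma (\<alpha> - 1 / 2)) * (t powr (- (\<alpha> - 1 / 2) - 1) * exp (- E / t))"
    unfolding Cq_def IG_def E_def[symmetric] K_def[symmetric] if_P[OF t] by (simp only: divide_inverse mult_ac)
  have M0: "Mq \<alpha> \<beta> a b x u t = Aq \<alpha> \<beta> a b x u * IG (\<alpha> + 1 / 2) E t + Cq \<alpha> \<beta> a b x u * IG (\<alpha> - 1 / 2) E t"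
    using x unfolding Mq_def E_def by simp
  have g2: "Gamma (\<alpha> + 1 / 2) / Gamma (\<alpha> + 1 / 2) = 1" "Gamma (\<alpha> - 1 / 2) / Gamma (\<alpha> - 1 / 2) = 1"
    using G2 G3 by auto
  have M: "Mq \<alpha> \<beta> a b x u t = 1 / sqrt K * \<beta> powr \<alpha> * (t powr (- 1 / 2) * t powr (- \<alpha> - 1) + t * (t powr (- 1 / 2) * t powr (- \<alpha> - 1))) * exp (- E / t)"
    unfolding M0 m1 m2 e1 e2 g2 t1 t2 k by (simp only: mult_1_right mult_1_left distrib_left distrib_right mult_ac)
  show ?thesis
    unfolding M kappa_int[OF x u t, folded r_def K_def] ex IG_def if_P[OF t]
    by (rule alg_int) (use G1 Kp in auto)
qed


lemma Bq_pos:
  assumes x: "a < x" "x < b" and u: "a < u" "u < b" and be: "\<beta> > 0"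
  shows "Bq \<alpha> \<beta> a b x u > 0"
proof -
  have l1: "ln ((u - a) / (x - a)) \<le> (u - a) / (x - a) - 1" using x u by (intro ln_le_minus_one) auto
  have l2: "ln ((b - u) / (b - x)) \<le> (b - u) / (b - x) - 1" using x u by (intro ln_le_minus_one) auto
  have "(x - a) * ln ((u - a) / (x - a)) \<le> (x - a) * ((u - a) / (x - a) - 1)"
    using l1 x by (intro mult_left_mono) auto
  also have "\<dots> = u - x" using x by (simp add: field_simps)
  finally have s1: "(x - a) * ln ((u - a) / (x - a)) \<le> u - x" .
  have "(b - x) * ln ((b - u) / (b - x)) \<le> (b - x) * ((b - u) / (b - x) - 1)"
    using l2 x by (intro mult_left_mono) auto
  also have "\<dots> = x - u" using x by (simp add: field_simps)
  finally have s2: "(b - x) * ln ((b - u) / (b - x)) \<le> x - u" .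
  have "((x - a) * ln ((u - a) / (x - a)) + (b - x) * ln ((b - u) / (b - x))) / (b - a) \<le> 0"
    using s1 s2 x by (intro divide_nonpos_pos) auto
  then show ?thesis unfolding Bq_def using be by linarith
qed

lemma Eq_pos:
  assumes ab: "a < b" and u: "a < u" "u < b" and be: "\<beta> > 0"
  shows "Eq \<alpha> \<beta> a b x u > 0"
proof -
  have "ln ((b - u) / (b - a)) < 0" using ab u by (simp add: ln_less_zero_iff divide_simps)
  then show ?thesis unfolding Eq_def using be by linarith
qed

lemma Gq_pos:
  assumes ab: "a < b" and u: "a < u" "u < b" and be: "\<beta> > 0"
  shows "Gq \<alpha> \<beta> a b x u > 0"
proof -
  have "ln ((u - a) / (b - a)) < 0" using ab u by (simp add: ln_less_zero_iff divide_simps)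
  then show ?thesis unfolding Gq_def using be by linarith
qed

declare IG_meas[measurable]

lemma tIG_nonneg: "a' > 0 \<Longrightarrow> 0 \<le> t * IG a' B t"
  unfolding IG_def by (simp add: Gamma_real_pos less_imp_le)

lemma mix:
  assumes p: "p \<ge> 0" and q: "q \<ge> 0" and a1: "a1 > 1" and a2: "a2 > 1" and B: "B > 0"
  shows "((\<lambda>t. p * IG a1 B t + q * IG a2 B t) has_integral p + q) UNIV"
    and "((\<lambda>t. t * (p * IG a1 B t + q * IG a2 B t)) has_integral B * (p / (a1 - 1) + q / (a2 - 1))) UNIV"
    and "0 \<le> p * IG a1 B t + q * IG a2 B t"
    and "0 \<le> t * (p * IG a1 B t + q * IG a2 B t)"
    and "(\<lambda>t. p * IG a1 B t + q * IG a2 B t) \<in> borel_measurable borel"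
    and "(\<lambda>t. t * (p * IG a1 B t + q * IG a2 B t)) \<in> borel_measurable borel"
proof -
  show "((\<lambda>t. p * IG a1 B t + q * IG a2 B t) has_integral p + q) UNIV"
    using has_integral_add[OF has_integral_mult_right[OF IG_integral, of a1 B p] has_integral_mult_right[OF IG_integral, of a2 B q]] a1 a2 B
    by simp
  have "((\<lambda>t. p * (t * IG a1 B t) + q * (t * IG a2 B t)) has_integral p * (B / (a1 - 1)) + q * (B / (a2 - 1))) UNIV"
    using has_integral_add[OF has_integral_mult_right[OF IG_mean, of a1 B p] has_integral_mult_right[OF IG_mean, of a2 B q]] a1 a2 B
    by simp
  moreover have "(\<lambda>t. p * (t * IG a1 B t) + q * (t * IG a2 B t)) = (\<lambda>t. t * (p * IG a1 B t + q * IG a2 B t))"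
    by (rule ext) (simp add: algebra_simps)
  moreover have "p * (B / (a1 - 1)) + q * (B / (a2 - 1)) = B * (p / (a1 - 1) + q / (a2 - 1))"
    by (simp add: algebra_simps)
  ultimately show "((\<lambda>t. t * (p * IG a1 B t + q * IG a2 B t)) has_integral B * (p / (a1 - 1) + q / (a2 - 1))) UNIV"
    by simp
  show "0 \<le> p * IG a1 B t + q * IG a2 B t"
    using p q a1 a2 IG_nonneg[of a1 B t] IG_nonneg[of a2 B t] by simp
  have "0 \<le> p * (t * IG a1 B t) + q * (t * IG a2 B t)"
    using p q a1 a2 tIG_nonneg[of a1 t B] tIG_nonneg[of a2 t B] by simp
  then show "0 \<le> t * (p * IG a1 B t + q * IG a2 B t)" by (simp add: algebra_simps)
  show "(\<lambda>t. p * IG a1 B t + q * IG a2 B t) \<in> borel_measurable borel" by measurable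
  show "(\<lambda>t. t * (p * IG a1 B t + q * IG a2 B t)) \<in> borel_measurable borel" by measurable
qed


lemma Mq_form:
  assumes ab: "a < b" and x: "a \<le> x" "x \<le> b" and u: "a < u" "u < b" and al: "\<alpha> > 3/2" and be: "\<beta> > 0"
  shows "\<exists>p q a1 a2 B. p \<ge> 0 \<and> q \<ge> 0 \<and> a1 > 1 \<and> a2 > 1 \<and> B > 0 \<and>
     Mq \<alpha> \<beta> a b x u = (\<lambda>t. p * IG a1 B t + q * IG a2 B t) \<and>
     wq \<alpha> \<beta> a b x u = p + q \<and> muq \<alpha> \<beta> a b x u = B * (p / (a1 - 1) + q / (a2 - 1))"
proof -
  have G0: "Gamma \<alpha> > 0" "Gamma (\<alpha> + 1) > 0" "Gamma (\<alpha> + 1 / 2) > 0" "Gamma (\<alpha> - 1 / 2) > 0"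
    using al by (simp_all add: Gamma_real_pos)
  consider "x = a" | "x = b" | "a < x \<and> x < b" using x by fastforce
  then show ?thesis
  proof cases
    case 1
    show ?thesis
      apply (rule exI[of _ "Fq \<alpha> \<beta> a b x u"], rule exI[of _ "Hq \<alpha> \<beta> a b x u"],
             rule exI[of _ \<alpha>], rule exI[of _ "\<alpha> + 1"], rule exI[of _ "Eq \<alpha> \<beta> a b x u"])
      using 1 ab al G0 Eq_pos[OF ab u be]
      by (auto simp: Fq_def Hq_def Mq_def wq_def muq_def)
  next
    case 2
    then have xa: "x \<noteq> a" using ab by simp
    show ?thesis
      apply (rule exI[of _ "Jq \<alpha> \<beta> a b x u"], rule exI[of _ "Kq \<alpha> \<beta> a b x u"],
             rule exI[of _ \<alpha>], rule exI[of _ "\<alpha> + 1"], rule exI[of _ "Gq \<alpha> \<beta> a b x u"])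
      using 2 xa ab al G0 Gq_pos[OF ab u be]
      by (auto simp: Jq_def Kq_def Mq_def wq_def muq_def)
  next
    case 3
    then have xa: "x \<noteq> a" "x \<noteq> b" by auto
    have e: "\<alpha> - 1 / 2 - 1 = \<alpha> - 3 / 2" "\<alpha> + 1 / 2 - 1 = \<alpha> - 1 / 2" by simp_all
    show ?thesis
      apply (rule exI[of _ "Aq \<alpha> \<beta> a b x u"], rule exI[of _ "Cq \<alpha> \<beta> a b x u"],
             rule exI[of _ "\<alpha> + 1 / 2"], rule exI[of _ "\<alpha> - 1 / 2"], rule exI[of _ "Bq \<alpha> \<beta> a b x u"])
      using 3 xa ab al G0 Bq_pos[of a x b u \<beta> \<alpha>] u be
      unfolding e
      by (auto simp: Aq_def Cq_def Mq_def wq_def muq_def)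
  qed
qed

lemma Mq_props:
  assumes ab: "a < b" and x: "a \<le> x" "x \<le> b" and u: "a < u" "u < b" and al: "\<alpha> > 3/2" and be: "\<beta> > 0"
  shows "(Mq \<alpha> \<beta> a b x u has_integral wq \<alpha> \<beta> a b x u) UNIV"
    and "((\<lambda>t. t * Mq \<alpha> \<beta> a b x u t) has_integral muq \<alpha> \<beta> a b x u) UNIV"
    and "0 \<le> Mq \<alpha> \<beta> a b x u t"
    and "0 \<le> t * Mq \<alpha> \<beta> a b x u t"
    and "Mq \<alpha> \<beta> a b x u \<in> borel_measurable borel"
    and "(\<lambda>t. t * Mq \<alpha> \<beta> a b x u t) \<in> borel_measurable borel"
proof -
  obtain p q a1 a2 B where H: "p \<ge> 0" "q \<ge> 0" "a1 > 1" "a2 > 1" "B > 0"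
    and M: "Mq \<alpha> \<beta> a b x u = (\<lambda>t. p * IG a1 B t + q * IG a2 B t)"
    and W: "wq \<alpha> \<beta> a b x u = p + q" and Mu: "muq \<alpha> \<beta> a b x u = B * (p / (a1 - 1) + q / (a2 - 1))"
    using Mq_form[OF assms] by blast
  note mx = mix[OF H]
  show "(Mq \<alpha> \<beta> a b x u has_integral wq \<alpha> \<beta> a b x u) UNIV" unfolding M W by (rule mx(1))
  show "((\<lambda>t. t * Mq \<alpha> \<beta> a b x u t) has_integral muq \<alpha> \<beta> a b x u) UNIV" unfolding M Mu by (rule mx(2))
  show "0 \<le> Mq \<alpha> \<beta> a b x u t" unfolding M by (rule mx(3))
  show "0 \<le> t * Mq \<alpha> \<beta> a b x u t" unfolding M by (rule mx(4))
  show "Mq \<alpha> \<beta> a b x u \<in> borel_measurable borel" unfolding M by (rule mx(5))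
  show "(\<lambda>t. t * Mq \<alpha> \<beta> a b x u t) \<in> borel_measurable borel" unfolding M by (rule mx(6))
qed


lemma kIG:
  assumes ab: "a < b" and x: "a \<le> x" "x \<le> b" and u: "a < u" "u < b" and t: "t > 0"
    and al: "\<alpha> > 3/2" and be: "\<beta> > 0"
  shows "kappa a b x t u * IG \<alpha> \<beta> t = Mq \<alpha> \<beta> a b x u t / Gamma \<alpha>"
proof -
  consider "x = a" | "x = b" | "a < x \<and> x < b" using x by fastforce
  then show ?thesis
  proof cases
    case 1 then show ?thesis using kIG_a[OF ab u t _ be, of \<alpha>] al by simp
  next
    case 2 then show ?thesis using kIG_b[OF ab u t _ be, of \<alpha>] al by simp
  next
    case 3 then show ?thesis using kIG_int[of a x b u t \<alpha> \<beta>] u t al be Bq_pos[of a x b u \<beta> \<alpha>] by simp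
  qed
qed

lemma Mq_zero: "t \<le> 0 \<Longrightarrow> Mq \<alpha> \<beta> a b x u t = 0"
  unfolding Mq_def IG_def by simp

lemma restrict_orthant:
  fixes f :: "real^'d \<Rightarrow> real"
  assumes "(f has_integral I) UNIV" and "\<And>h. h \<notin> orthant \<Longrightarrow> f h = 0"
  shows "(f has_integral I) orthant"
proof -
  have "(\<lambda>h. if h \<in> orthant then f h else 0) = f" using assms(2) by auto
  then show ?thesis using assms(1) has_integral_restrict_UNIV[of orthant f I] by simp
qed

theorem theorem1:
  fixes a b \<beta> :: "real^'d" and X :: "nat \<Rightarrow> real^'d" and n i :: nat and \<alpha> :: real
  assumes ab: "\<forall>l. a$l < b$l"
    and n2: "n \<ge> 2"
    and i_in: "i \<in> {1..n}"
    and X_in: "\<forall>j\<in>{1..n}. \<forall>l. a$l \<le> X j $ l \<and> X j $ l \<le> b$l"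
    and X_int: "\<forall>j\<in>{1..n} - {i}. \<forall>l. a$l < X j $ l \<and> X j $ l < b$l"
    and alpha: "\<alpha> > 3 / 2"
    and beta: "\<forall>l. \<beta>$l > 0"
  shows "let D = (\<Sum>j\<in>{1..n} - {i}. \<Prod>l\<in>UNIV. wq \<alpha> (\<beta>$l) (a$l) (b$l) (X i $ l) (X j $ l)) in
           (\<forall>h\<in>orthant. posterior n X i a b \<alpha> \<beta> h
               = (\<Sum>j\<in>{1..n} - {i}. \<Prod>l\<in>UNIV. Mq \<alpha> (\<beta>$l) (a$l) (b$l) (X i $ l) (X j $ l) (h$l)) / D)
         \<and> (\<forall>m. posterior_mean n X i a b \<alpha> \<beta> m
               = (\<Sum>j\<in>{1..n} - {i}. (\<Prod>l\<in>UNIV - {m}. wq \<alpha> (\<beta>$l) (a$l) (b$l) (X i $ l) (X j $ l))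
                    * muq \<alpha> (\<beta>$m) (a$m) (b$m) (X i $ m) (X j $ m)) / D)"
proof -
  define S where "S = {1..n} - {i}"
  define M where "M j l t = Mq \<alpha> (\<beta>$l) (a$l) (b$l) (X i $ l) (X j $ l) t" for j l t
  define w where "w j l = wq \<alpha> (\<beta>$l) (a$l) (b$l) (X i $ l) (X j $ l)" for j l
  define mu where "mu j l = muq \<alpha> (\<beta>$l) (a$l) (b$l) (X i $ l) (X j $ l)" for j l
  define D where "D = (\<Sum>j\<in>S. \<Prod>l\<in>UNIV. w j l)"
  define F where "F h = (\<Sum>j\<in>S. \<Prod>l\<in>UNIV. M j l (h$l))" for h :: "real^'d"
  define c where "c = 1 / (real n - 1) * (\<Prod>l\<in>(UNIV::'d set). 1 / Gamma \<alpha>)"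
  have finS: "finite S" unfolding S_def by simp
  have Xi: "a$l \<le> X i $ l" "X i $ l \<le> b$l" for l using X_in i_in by auto
  have Xj: "a$l < X j $ l" "X j $ l < b$l" if "j \<in> S" for j l using X_int that unfolding S_def by auto
  have Pint: "(M j l has_integral w j l) UNIV" if "j \<in> S" for j l
    unfolding M_def w_def by (rule Mq_props(1)[OF ab[rule_format] Xi Xj[OF that] alpha beta[rule_format]])
  have Pmean: "((\<lambda>t. t * M j l t) has_integral mu j l) UNIV" if "j \<in> S" for j l
    unfolding M_def mu_def by (rule Mq_props(2)[OF ab[rule_format] Xi Xj[OF that] alpha beta[rule_format]])
  have Pnn: "0 \<le> M j l t" "0 \<le> t * M j l t" if "j \<in> S" for j l t
    unfolding M_def by (rule Mq_props(3)[OF ab[rule_format] Xi Xj[OF that] alpha beta[rule_format]], rule Mq_props(4)[OF ab[rule_format] Xi Xj[OF that] alpha beta[rule_format]])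
  have Pm: "M j l \<in> borel_measurable borel" "(\<lambda>t. t * M j l t) \<in> borel_measurable borel" if "j \<in> S" for j l
    unfolding M_def by (rule Mq_props(5)[OF ab[rule_format] Xi Xj[OF that] alpha beta[rule_format]], rule Mq_props(6)[OF ab[rule_format] Xi Xj[OF that] alpha beta[rule_format]])
  have G: "Gamma \<alpha> > 0" using alpha by (simp add: Gamma_real_pos)
  have c0: "c \<noteq> 0" unfolding c_def using G n2 by auto
  have pw: "fhat_loo n X i a b h * prior \<alpha> \<beta> h = c * F h" if h: "h \<in> orthant" for h
  proof -
    have hp: "h$l > 0" for l using h unfolding orthant_def by auto
    have kk: "kappa (a$l) (b$l) (X i $ l) (h$l) (X j $ l) * IG \<alpha> (\<beta>$l) (h$l) = M j l (h$l) * (1 / Gamma \<alpha>)"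
      if "j \<in> S" for j l
      unfolding M_def using kIG[OF ab[rule_format] Xi Xj[OF that] hp alpha beta[rule_format]] by simp
    have "fhat_loo n X i a b h * prior \<alpha> \<beta> h
        = 1 / (real n - 1) * (\<Sum>j\<in>S. (\<Prod>l\<in>UNIV. kappa (a$l) (b$l) (X i $ l) (h$l) (X j $ l)) * (\<Prod>l\<in>UNIV. IG \<alpha> (\<beta>$l) (h$l)))"
      unfolding fhat_loo_def prior_def S_def by (simp add: sum_distrib_right)
    also have "\<dots> = 1 / (real n - 1) * (\<Sum>j\<in>S. (\<Prod>l\<in>UNIV. M j l (h$l)) * (\<Prod>l\<in>(UNIV::'d set). 1 / Gamma \<alpha>))"
    proof (rule arg_cong[where f="\<lambda>x. 1 / (real n - 1) * x"], rule sum.cong)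
      fix j assume j: "j \<in> S"
      have "(\<Prod>l\<in>UNIV. kappa (a$l) (b$l) (X i $ l) (h$l) (X j $ l)) * (\<Prod>l\<in>UNIV. IG \<alpha> (\<beta>$l) (h$l))
          = (\<Prod>l\<in>UNIV. kappa (a$l) (b$l) (X i $ l) (h$l) (X j $ l) * IG \<alpha> (\<beta>$l) (h$l))"
        by (rule prod.distrib[symmetric])
      also have "\<dots> = (\<Prod>l\<in>UNIV. M j l (h$l) * (1 / Gamma \<alpha>))"
        by (rule prod.cong) (simp_all add: kk j)
      also have "\<dots> = (\<Prod>l\<in>UNIV. M j l (h$l)) * (\<Prod>l\<in>(UNIV::'d set). 1 / Gamma \<alpha>)"
        by (rule prod.distrib)
      finally show "(\<Prod>l\<in>UNIV. kappa (a$l) (b$l) (X i $ l) (h$l) (X j $ l)) * (\<Prod>l\<in>UNIV. IG \<alpha> (\<beta>$l) (h$l))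
          = (\<Prod>l\<in>UNIV. M j l (h$l)) * (\<Prod>l\<in>(UNIV::'d set). 1 / Gamma \<alpha>)" .
    qed simp
    also have "\<dots> = c * F h"
    proof -
      have "(\<Sum>j\<in>S. (\<Prod>l\<in>UNIV. M j l (h$l)) * (\<Prod>l\<in>(UNIV::'d set). 1 / Gamma \<alpha>))
          = (\<Sum>j\<in>S. (\<Prod>l\<in>UNIV. M j l (h$l))) * (\<Prod>l\<in>(UNIV::'d set). 1 / Gamma \<alpha>)"
        by (rule sum_distrib_right[symmetric])
      then show ?thesis unfolding c_def F_def by (simp only: mult_ac)
    qed
    finally show ?thesis .
  qed
  have van: "(\<Prod>l\<in>UNIV. M j l (h$l)) = 0" if hn: "h \<notin> orthant" for j h
  proof -
    obtain l where "h$l \<le> 0" using hn unfolding orthant_def by (auto simp: not_less)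
    then have "M j l (h$l) = 0" unfolding M_def by (rule Mq_zero)
    then show ?thesis by (intro prod_zero) auto
  qed
  have F0: "F h = 0" if "h \<notin> orthant" for h unfolding F_def by (rule sum.neutral) (use van[OF that] in blast)
  have IF: "(F has_integral D) orthant"
  proof (rule restrict_orthant)
    show "(F has_integral D) UNIV"
      unfolding F_def D_def
      by (rule has_integral_sum[OF finS], rule prod_has_integral) (use Pm Pnn Pint in auto)
    show "F h = 0" if "h \<notin> orthant" for h unfolding F_def by (rule sum.neutral) (use van[OF that] in blast)
  qed
  have Z: "integral orthant (\<lambda>g. fhat_loo n X i a b g * prior \<alpha> \<beta> g) = c * D"
  proof -
    have "integral orthant (\<lambda>g. fhat_loo n X i a b g * prior \<alpha> \<beta> g) = integral orthant (\<lambda>g. c * F g)"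
      by (rule integral_cong) (simp add: pw)
    also have "\<dots> = c * D" using has_integral_mult_right[OF IF, of c] by (rule integral_unique)
    finally show ?thesis .
  qed
  have post: "posterior n X i a b \<alpha> \<beta> h = F h / D" if "h \<in> orthant" for h
    unfolding posterior_def Z pw[OF that] using c0 by simp
  have mean: "posterior_mean n X i a b \<alpha> \<beta> m = (\<Sum>j\<in>S. (\<Prod>l\<in>UNIV - {m}. w j l) * mu j m) / D" for m
  proof -
    define \<phi> where "\<phi> j l t = (if l = m then t * M j l t else M j l t)" for j l t
    have e1: "(\<Prod>l\<in>UNIV. \<phi> j l (h$l)) = h$m * (\<Prod>l\<in>UNIV. M j l (h$l))" for j h
    proof -
      have "(\<Prod>l\<in>UNIV. \<phi> j l (h$l)) = \<phi> j m (h$m) * (\<Prod>l\<in>UNIV - {m}. \<phi> j l (h$l))"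
        by (rule prod.remove) auto
      also have "(\<Prod>l\<in>UNIV - {m}. \<phi> j l (h$l)) = (\<Prod>l\<in>UNIV - {m}. M j l (h$l))"
        by (rule prod.cong) (auto simp: \<phi>_def)
      finally show ?thesis
        using prod.remove[of UNIV m "\<lambda>l. M j l (h$l)"] by (simp add: \<phi>_def)
    qed
    have e2: "(\<Prod>l\<in>UNIV. if l = m then mu j l else w j l) = (\<Prod>l\<in>UNIV - {m}. w j l) * mu j m" for j
    proof -
      have "(\<Prod>l\<in>UNIV. if l = m then mu j l else w j l) = mu j m * (\<Prod>l\<in>UNIV - {m}. if l = m then mu j l else w j l)"
        by (subst prod.remove[of UNIV m]) auto
      also have "(\<Prod>l\<in>UNIV - {m}. if l = m then mu j l else w j l) = (\<Prod>l\<in>UNIV - {m}. w j l)"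
        by (rule prod.cong) auto
      finally show ?thesis by simp
    qed
    have IU: "((\<lambda>h. \<Prod>l\<in>UNIV. \<phi> j l (h$l)) has_integral (\<Prod>l\<in>UNIV. if l = m then mu j l else w j l)) UNIV"
      if j: "j \<in> S" for j
    proof (rule prod_has_integral)
      show "\<phi> j l \<in> borel_measurable borel" for l
        unfolding \<phi>_def using Pm[OF j] by (cases "l = m") auto
      show "0 \<le> \<phi> j l t" for l t
        unfolding \<phi>_def using Pnn[OF j] by (cases "l = m") auto
      show "(\<phi> j l has_integral (if l = m then mu j l else w j l)) UNIV" for l
        unfolding \<phi>_def using Pmean[OF j] Pint[OF j] by (cases "l = m") auto
    qed
    have IM: "((\<lambda>h. h$m * F h) has_integral (\<Sum>j\<in>S. (\<Prod>l\<in>UNIV - {m}. w j l) * mu j m)) orthant"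
    proof (rule restrict_orthant)
      have "((\<lambda>h. \<Sum>j\<in>S. \<Prod>l\<in>UNIV. \<phi> j l (h$l)) has_integral (\<Sum>j\<in>S. (\<Prod>l\<in>UNIV - {m}. w j l) * mu j m)) UNIV"
        using has_integral_sum[OF finS IU] by (simp add: e2)
      moreover have "(\<lambda>h. \<Sum>j\<in>S. \<Prod>l\<in>UNIV. \<phi> j l (h$l)) = (\<lambda>h. h$m * F h)"
        by (rule ext) (simp add: e1 F_def sum_distrib_left)
      ultimately show "((\<lambda>h. h$m * F h) has_integral (\<Sum>j\<in>S. (\<Prod>l\<in>UNIV - {m}. w j l) * mu j m)) UNIV"
        by simp
      show "h$m * F h = 0" if "h \<notin> orthant" for h using F0[OF that] by simp
    qed
    have "posterior_mean n X i a b \<alpha> \<beta> m = integral orthant (\<lambda>h. h$m * F h / D)"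
      unfolding posterior_mean_def by (rule integral_cong) (simp add: post)
    also have "\<dots> = (\<Sum>j\<in>S. (\<Prod>l\<in>UNIV - {m}. w j l) * mu j m) / D"
      by (rule integral_unique, rule has_integral_divide[OF IM])
    finally show ?thesis .
  qed
  show ?thesis
    unfolding Let_def
    using post mean unfolding D_def F_def S_def M_def w_def mu_def by auto
qed

end
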